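(* Let $\varphi:\mathrm{Mag}(A)\to\mathcal T^{pl}_A$ be the unique linear map with $\varphi(a)=\bullet_a$ for all $a\in A$ and $\varphi(\sigma\rhd\tau)=\varphi(\sigma)\curvearrowright\varphi(\tau)$ for all $\sigma,\tau\in\mathrm{Mag}(A)$. Then $\varphi$ is a linear isomorphism; hence the magmatic algebras $(\mathrm{Mag}(A),\rhd)$ and $(\mathcal T^{pl}_A,\curvearrowright)$ are isomorphic.
   Context: $A$ is a finite set and $\mathbf k$ a field of characteristic zero. $(\mathrm{Mag}(A),\rhd)$ is the free magmatic algebra on $A$ (the linear span of the free magma on $A$, with bilinear product $\rhd$ and no axioms). $T^{pl}_A$ is the set of planar rooted trees with vertices decorated by elements of $A$, $\bullet_a$ the one-vertex tree decorated by $a$, and $\mathcal T^{pl}_A$ the vector space with basis $T^{pl}_A$. The right Butcher product $\sigma\diamond\tau$ of two trees is the tree obtained by grafting the root of $\sigma$ onto the root of $\tau$ as its new rightmost child; every tree with at least two vertices is uniquely of the form $\tau_1\diamond\tau_2$. Left grafting $\curvearrowright:\mathcal T^{pl}_A\times\mathcal T^{pl}_A\to\mathcal T^{pl}_A$ is the bilinear product defined recursively by $\tau\curvearrowright\bullet_a:=\tau\diamond\bullet_a$ and $\tau\curvearrowright(\tau_1\diamond\tau_2):=(\tau\curvearrowright\tau_1)\diamond\tau_2+\tau_1\diamond(\tau\curvearrowright\tau_2)$ for trees $\tau,\tau_1,\tau_2$ (with $\diamond$ extended bilinearly). *)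

theory Defs
  imports Complex_Main "HOL-Library.Poly_Mapping"
begin

(* Free magma on the decoration alphabet 'a (A is modelled as a finite type 'a). *)
datatype 'a magma = MLeaf 'a | MOp "'a magma" "'a magma"

datatype 'a ptree = Node 'a "'a ptree list"

definition sc :: "'k::semiring_0 \<Rightarrow> ('b \<Rightarrow>\<^sub>0 'k) \<Rightarrow> ('b \<Rightarrow>\<^sub>0 'k)" where
  "sc c v = Poly_Mapping.map (\<lambda>x. c * x) v"

definition bilin :: "('b \<Rightarrow> 'c \<Rightarrow> ('d \<Rightarrow>\<^sub>0 'k::semiring_0))
    \<Rightarrow> ('b \<Rightarrow>\<^sub>0 'k) \<Rightarrow> ('c \<Rightarrow>\<^sub>0 'k) \<Rightarrow> ('d \<Rightarrow>\<^sub>0 'k)" where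
  "bilin f x y = (\<Sum>s\<in>Poly_Mapping.keys x. \<Sum>t\<in>Poly_Mapping.keys y. sc (Poly_Mapping.lookup x s * Poly_Mapping.lookup y t) (f s t))"

definition mprod :: "('a magma \<Rightarrow>\<^sub>0 'k::semiring_1) \<Rightarrow> ('a magma \<Rightarrow>\<^sub>0 'k) \<Rightarrow> ('a magma \<Rightarrow>\<^sub>0 'k)" where
  "mprod = bilin (\<lambda>s t. Poly_Mapping.single (MOp s t) 1)"

fun butcher :: "'a ptree \<Rightarrow> 'a ptree \<Rightarrow> 'a ptree" where
  "butcher s (Node a ts) = Node a (ts @ [s])"

definition bdia :: "('a ptree \<Rightarrow>\<^sub>0 'k::semiring_1) \<Rightarrow> ('a ptree \<Rightarrow>\<^sub>0 'k) \<Rightarrow> ('a ptree \<Rightarrow>\<^sub>0 'k)" where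
  "bdia = bilin (\<lambda>s t. Poly_Mapping.single (butcher s t) 1)"

(* left grafting on basis trees, by the recursion of the paper:
   tau \<curvearrowright> \<bullet>_a = tau \<diamond> \<bullet>_a,
   tau \<curvearrowright> (t1 \<diamond> t2) = (tau \<curvearrowright> t1) \<diamond> t2 + t1 \<diamond> (tau \<curvearrowright> t2),
   where Node a ts with ts \<noteq> [] equals (last ts) \<diamond> (Node a (butlast ts)). *)
lemma size_last_lt: "ts \<noteq> [] \<Longrightarrow> size (last ts) < Suc (size_list size ts)"
proof -
  assume "ts \<noteq> []"
  then obtain ys y where e: "ts = ys @ [y]" by (metis append_butlast_last_id)
  show ?thesis by (simp add: e)
qed
lemma size_butlast_lt: "ts \<noteq> [] \<Longrightarrow> size_list size (butlast (ts :: 'a ptree list)) < size_list size ts"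
proof -
  assume "ts \<noteq> []"
  then obtain ys y where e: "ts = ys @ [y]" by (metis append_butlast_last_id)
  show ?thesis by (simp add: e)
qed

function graft_b :: "'a ptree \<Rightarrow> 'a ptree \<Rightarrow> ('a ptree \<Rightarrow>\<^sub>0 'k::semiring_1)" where
  "graft_b \<tau> (Node a ts) =
     (if ts = [] then Poly_Mapping.single (butcher \<tau> (Node a [])) 1
      else bdia (graft_b \<tau> (last ts)) (Poly_Mapping.single (Node a (butlast ts)) 1)
         + bdia (Poly_Mapping.single (last ts) 1) (graft_b \<tau> (Node a (butlast ts))))"
  by pat_completeness auto
termination
  apply (relation "measure (\<lambda>(_, t). size t)")
    apply simp
   apply (auto simp: size_last_lt size_butlast_lt)
  done


definition graft :: "('a ptree \<Rightarrow>\<^sub>0 'k::semiring_1) \<Rightarrow> ('a ptree \<Rightarrow>\<^sub>0 'k) \<Rightarrow> ('a ptree \<Rightarrow>\<^sub>0 'k)" where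
  "graft = bilin graft_b"

end

theory Submission
  imports Defs
begin



lemma lookup_sc [simp]: "Poly_Mapping.lookup (sc c v) k = c * Poly_Mapping.lookup v k"
  unfolding sc_def by transfer (auto simp: when_def)

lemma sc_add_r: "sc c (x + y) = sc c x + sc c y"
  by (rule poly_mapping_eqI) (simp add: lookup_add algebra_simps)
lemma sc_add_l: "sc (a + b) x = sc a x + sc b x"
  by (rule poly_mapping_eqI) (simp add: lookup_add algebra_simps)
lemma sc_sc: "sc a (sc b x) = sc (a * b) x"
  by (rule poly_mapping_eqI) (simp add: algebra_simps)
lemma sc_one [simp]: "sc (1::'k::semiring_1) x = x"
  by (rule poly_mapping_eqI) simp
lemma sc_zero [simp]: "sc 0 x = 0"
  by (rule poly_mapping_eqI) simp
lemma sc_zero_r [simp]: "sc c 0 = 0"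
  by (rule poly_mapping_eqI) simp
lemma sc_sum_r: "sc c (sum f A) = (\<Sum>a\<in>A. sc c (f a))"
  by (rule poly_mapping_eqI) (simp add: lookup_sum sum_distrib_left)
lemma keys_sc: "Poly_Mapping.keys (sc c v) \<subseteq> Poly_Mapping.keys v"
  by (auto simp: in_keys_iff)

lemma vs_sc: "vector_space (sc :: 'k::field \<Rightarrow> ('b \<Rightarrow>\<^sub>0 'k) \<Rightarrow> _)"
  by unfold_locales (simp_all add: sc_add_r sc_add_l sc_sc)

lemma keys_sum': "Poly_Mapping.keys(sum b I) \<subseteq> (\<Union>i \<in>I. Poly_Mapping.keys(b i))"
proof (induction I rule: infinite_finite_induct)
  case (insert i I)
  then show ?case
    using keys_add [of "b i" "sum b I"] by auto
qed auto

lemma expand: "x = (\<Sum>m\<in>Poly_Mapping.keys x. Poly_Mapping.single m (Poly_Mapping.lookup x m))"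
proof (rule poly_mapping_eqI)
  fix k
  show "Poly_Mapping.lookup x k = Poly_Mapping.lookup (\<Sum>m\<in>Poly_Mapping.keys x. Poly_Mapping.single m (Poly_Mapping.lookup x m)) k"
    by (cases "k \<in> Poly_Mapping.keys x")
       (auto simp: lookup_sum lookup_single when_def in_keys_iff)
qed

lemma single_sc: "Poly_Mapping.single m c = sc c (Poly_Mapping.single m (1::'k::semiring_1))"
  by (rule poly_mapping_eqI) (simp add: lookup_single when_def)

lemma bilin_super:
  assumes "finite S" "Poly_Mapping.keys x \<subseteq> S" "finite T" "Poly_Mapping.keys y \<subseteq> T"
  shows "bilin f x y = (\<Sum>s\<in>S. \<Sum>t\<in>T. sc (Poly_Mapping.lookup x s * Poly_Mapping.lookup y t) (f s t))"
proof -
  have "bilin f x y = (\<Sum>s\<in>S. \<Sum>t\<in>Poly_Mapping.keys y. sc (Poly_Mapping.lookup x s * Poly_Mapping.lookup y t) (f s t))"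
    unfolding bilin_def
    by (rule sum.mono_neutral_left) (use assms in \<open>auto simp: in_keys_iff\<close>)
  show ?thesis
    unfolding \<open>bilin f x y = _\<close>
    by (rule sum.cong[OF refl], rule sum.mono_neutral_left) (use assms in \<open>auto simp: in_keys_iff\<close>)
qed

lemma bilin_add1: "bilin f (x + x') y = bilin f x y + bilin f x' y"
proof -
  let ?S = "Poly_Mapping.keys x \<union> Poly_Mapping.keys x'"
  have e: "bilin f z y = (\<Sum>s\<in>?S. \<Sum>t\<in>Poly_Mapping.keys y. sc (Poly_Mapping.lookup z s * Poly_Mapping.lookup y t) (f s t))"
    if "Poly_Mapping.keys z \<subseteq> ?S" for z
    by (rule bilin_super) (use that in auto)
  show ?thesis
    by (subst (1 2 3) e) (use keys_add[of x x'] in \<open>auto simp: lookup_add algebra_simps sc_add_l sum.distrib\<close>)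
qed

lemma bilin_add2: "bilin f x (y + y') = bilin f x y + bilin f x y'"
proof -
  let ?T = "Poly_Mapping.keys y \<union> Poly_Mapping.keys y'"
  have e: "bilin f x z = (\<Sum>s\<in>Poly_Mapping.keys x. \<Sum>t\<in>?T. sc (Poly_Mapping.lookup x s * Poly_Mapping.lookup z t) (f s t))"
    if "Poly_Mapping.keys z \<subseteq> ?T" for z
    by (rule bilin_super) (use that in auto)
  show ?thesis
    by (subst (1 2 3) e) (use keys_add[of y y'] in \<open>auto simp: lookup_add algebra_simps sc_add_l sum.distrib\<close>)
qed

lemma bilin_sc1: "bilin f (sc (c::'k::comm_semiring_1) x) y = sc c (bilin f x y)"
proof -
  have "bilin f (sc c x) y = (\<Sum>s\<in>Poly_Mapping.keys x. \<Sum>t\<in>Poly_Mapping.keys y. sc (Poly_Mapping.lookup (sc c x) s * Poly_Mapping.lookup y t) (f s t))"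
    by (rule bilin_super) (auto intro: keys_sc[THEN subsetD])
  also have "\<dots> = sc c (bilin f x y)"
    unfolding bilin_def sc_sum_r sc_sc lookup_sc
    by (intro sum.cong refl arg_cong2[where f=sc]) (simp add: algebra_simps)
  finally show ?thesis .
qed

lemma bilin_sc2: "bilin f x (sc (c::'k::comm_semiring_1) y) = sc c (bilin f x y)"
proof -
  have "bilin f x (sc c y) = (\<Sum>s\<in>Poly_Mapping.keys x. \<Sum>t\<in>Poly_Mapping.keys y. sc (Poly_Mapping.lookup x s * Poly_Mapping.lookup (sc c y) t) (f s t))"
    by (rule bilin_super) (auto intro: keys_sc[THEN subsetD])
  also have "\<dots> = sc c (bilin f x y)"
    unfolding bilin_def sc_sum_r sc_sc lookup_sc
    by (intro sum.cong refl arg_cong2[where f=sc]) (simp add: algebra_simps)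
  finally show ?thesis .
qed

lemma bilin_zero1 [simp]: "bilin f 0 y = 0" by (simp add: bilin_def)
lemma bilin_zero2 [simp]: "bilin f x 0 = 0" by (simp add: bilin_def)

lemma bilin_single: "bilin f (Poly_Mapping.single s a) (Poly_Mapping.single t b) = sc (a * b) (f s t)"
  by (subst bilin_super[of "{s}" _ "{t}"]) (auto simp: lookup_single)

lemma bilin_single1: "bilin f (Poly_Mapping.single s (1::'k::semiring_1)) (Poly_Mapping.single t 1) = f s t"
  by (simp add: bilin_single)

lemma bilin_sum1: "bilin f (sum g A) y = (\<Sum>a\<in>A. bilin f (g a) y)"
  by (induction A rule: infinite_finite_induct) (auto simp: bilin_add1)
lemma bilin_sum2: "bilin f x (sum g A) = (\<Sum>a\<in>A. bilin f x (g a))"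
  by (induction A rule: infinite_finite_induct) (auto simp: bilin_add2)

lemma keys_bilin: "Poly_Mapping.keys (bilin f x y) \<subseteq> (\<Union>s\<in>Poly_Mapping.keys x. \<Union>t\<in>Poly_Mapping.keys y. Poly_Mapping.keys (f s t))"
proof
  fix k assume "k \<in> Poly_Mapping.keys (bilin f x y)"
  then have "k \<in> (\<Union>s\<in>Poly_Mapping.keys x. Poly_Mapping.keys (\<Sum>t\<in>Poly_Mapping.keys y. sc (Poly_Mapping.lookup x s * Poly_Mapping.lookup y t) (f s t)))"
    unfolding bilin_def by (rule keys_sum'[THEN subsetD])
  then obtain s where s: "s \<in> Poly_Mapping.keys x" and k1: "k \<in> Poly_Mapping.keys (\<Sum>t\<in>Poly_Mapping.keys y. sc (Poly_Mapping.lookup x s * Poly_Mapping.lookup y t) (f s t))"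
    by blast
  from k1 have "k \<in> (\<Union>t\<in>Poly_Mapping.keys y. Poly_Mapping.keys (sc (Poly_Mapping.lookup x s * Poly_Mapping.lookup y t) (f s t)))"
    by (rule keys_sum'[THEN subsetD])
  then obtain t where t: "t \<in> Poly_Mapping.keys y" and k2: "k \<in> Poly_Mapping.keys (sc (Poly_Mapping.lookup x s * Poly_Mapping.lookup y t) (f s t))"
    by blast
  from k2 have "k \<in> Poly_Mapping.keys (f s t)" by (rule keys_sc[THEN subsetD])
  then show "k \<in> (\<Union>s\<in>Poly_Mapping.keys x. \<Union>t\<in>Poly_Mapping.keys y. Poly_Mapping.keys (f s t))"
    using s t by blast
qed

lemma lookup_bilin: "Poly_Mapping.lookup (bilin f x y) k = (\<Sum>s\<in>Poly_Mapping.keys x. \<Sum>t\<in>Poly_Mapping.keys y. Poly_Mapping.lookup x s * Poly_Mapping.lookup y t * Poly_Mapping.lookup (f s t) k)"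
  unfolding bilin_def by (simp add: lookup_sum)




declare graft_b.simps[simp del]

fun nv :: "'a ptree \<Rightarrow> nat" where "nv (Node a ts) = Suc (sum_list (map nv ts))"
fun dd :: "'a ptree \<Rightarrow> nat" where "dd (Node a ts) = sum_list (map (\<lambda>c. dd c + nv c) ts)"
fun lead :: "'a ptree \<Rightarrow> 'a ptree \<Rightarrow> 'a ptree" where "lead s (Node a ts) = Node a (s#ts)"

lemma nv_pos: "0 < nv t" by (cases t) auto
lemma nv_butcher [simp]: "nv (butcher s t) = nv s + nv t" by (cases t) auto
lemma dd_butcher [simp]: "dd (butcher s t) = dd t + dd s + nv s" by (cases t) auto
lemma dd_lead: "dd (lead s t) = dd s + nv s + dd t" by (cases t) auto
lemma nv_lead: "nv (lead s t) = nv s + nv t" by (cases t) auto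
lemma node_decomp: "ts \<noteq> [] \<Longrightarrow> Node a ts = butcher (last ts) (Node a (butlast ts))"
  by simp
lemma butcher_inj: "butcher l t = butcher l t' \<Longrightarrow> t = t'"
  by (cases t; cases t') auto
lemma butcher_eq_iff [simp]: "butcher l t = butcher l t' \<longleftrightarrow> t = t'"
  using butcher_inj by blast
lemma lead_butcher: "lead s (butcher l t) = butcher l (lead s t)" by (cases t) auto

lemma keys_bdia: "Poly_Mapping.keys (bdia x y) \<subseteq> {butcher s t |s t. s \<in> Poly_Mapping.keys x \<and> t \<in> Poly_Mapping.keys y}"
  unfolding bdia_def using keys_bilin[of "\<lambda>s t. Poly_Mapping.single (butcher s t) 1" x y]
  by (auto split: if_splits) blast

lemma lookup_bdia_single: "Poly_Mapping.lookup (bdia (Poly_Mapping.single l 1) y) (butcher l t) = (Poly_Mapping.lookup y t :: 'k::semiring_1)"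
proof -
  have "bdia (Poly_Mapping.single l 1) y = (\<Sum>s\<in>{l}. \<Sum>u\<in>Poly_Mapping.keys y. sc (Poly_Mapping.lookup (Poly_Mapping.single l (1::'k)) s * Poly_Mapping.lookup y u) (Poly_Mapping.single (butcher s u) 1))"
    unfolding bdia_def by (rule bilin_super) auto
  then have e: "bdia (Poly_Mapping.single l 1) y = (\<Sum>u\<in>Poly_Mapping.keys y. sc (Poly_Mapping.lookup y u) (Poly_Mapping.single (butcher l u) 1))"
    by simp
  show ?thesis
    unfolding e lookup_sum lookup_sc
    by (cases "t \<in> Poly_Mapping.keys y")
       (auto simp: lookup_single when_def in_keys_iff if_distrib cong: if_cong)
qed

lemma graft_b_lead:
  "Poly_Mapping.lookup (graft_b \<tau> t :: _ \<Rightarrow>\<^sub>0 'k::semiring_1) (lead \<tau> t) = 1 \<and>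
   (\<forall>T\<in>Poly_Mapping.keys (graft_b \<tau> t :: _ \<Rightarrow>\<^sub>0 'k). nv T = nv \<tau> + nv t \<and> (T = lead \<tau> t \<or> dd T > dd \<tau> + nv \<tau> + dd t))"
proof (induction \<tau> t rule: graft_b.induct)
  case (1 \<tau> a ts)
  show ?case
  proof (cases "ts = []")
    case True
    then show ?thesis by (subst graft_b.simps, simp)+
  next
    case False
    define l where "l = last ts"
    define t0 where "t0 = Node a (butlast ts)"
    have t: "Node a ts = butcher l t0" using False by (simp add: l_def t0_def)
    have IH1: "Poly_Mapping.lookup (graft_b \<tau> l :: _ \<Rightarrow>\<^sub>0 'k) (lead \<tau> l) = 1 \<and>
      (\<forall>T\<in>Poly_Mapping.keys (graft_b \<tau> l :: _ \<Rightarrow>\<^sub>0 'k). nv T = nv \<tau> + nv l \<and> (T = lead \<tau> l \<or> dd T > dd \<tau> + nv \<tau> + dd l))"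
      using "1.IH"(1)[OF False] by (simp add: l_def)
    have IH2: "Poly_Mapping.lookup (graft_b \<tau> t0 :: _ \<Rightarrow>\<^sub>0 'k) (lead \<tau> t0) = 1 \<and>
      (\<forall>T\<in>Poly_Mapping.keys (graft_b \<tau> t0 :: _ \<Rightarrow>\<^sub>0 'k). nv T = nv \<tau> + nv t0 \<and> (T = lead \<tau> t0 \<or> dd T > dd \<tau> + nv \<tau> + dd t0))"
      using "1.IH"(2)[OF False] by (simp add: t0_def)
    define X where "X = (bdia (graft_b \<tau> l) (Poly_Mapping.single t0 1) :: _ \<Rightarrow>\<^sub>0 'k)"
    define Y where "Y = (bdia (Poly_Mapping.single l 1) (graft_b \<tau> t0) :: _ \<Rightarrow>\<^sub>0 'k)"
    have g: "(graft_b \<tau> (Node a ts) :: _ \<Rightarrow>\<^sub>0 'k) = X + Y"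
      using False by (subst graft_b.simps) (simp add: X_def Y_def l_def t0_def)
    have kX: "\<forall>T\<in>Poly_Mapping.keys X. nv T = nv \<tau> + nv (Node a ts) \<and> dd T > dd \<tau> + nv \<tau> + dd (Node a ts)"
    proof
      fix T assume "T \<in> Poly_Mapping.keys X"
      then obtain S where S: "S \<in> Poly_Mapping.keys (graft_b \<tau> l :: _ \<Rightarrow>\<^sub>0 'k)" and T: "T = butcher S t0"
        using keys_bdia[of "graft_b \<tau> l" "Poly_Mapping.single t0 (1::'k)"] unfolding X_def by auto
      have "nv S = nv \<tau> + nv l" "dd S \<ge> dd \<tau> + nv \<tau> + dd l"
        using IH1 S by (auto simp: dd_lead)
      moreover have "nv \<tau> > 0" by (rule nv_pos)
      ultimately show "nv T = nv \<tau> + nv (Node a ts) \<and> dd T > dd \<tau> + nv \<tau> + dd (Node a ts)"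
        unfolding T t by simp
    qed
    have kY: "\<forall>T\<in>Poly_Mapping.keys Y. nv T = nv \<tau> + nv (Node a ts) \<and> (T = lead \<tau> (Node a ts) \<or> dd T > dd \<tau> + nv \<tau> + dd (Node a ts))"
    proof
      fix T assume "T \<in> Poly_Mapping.keys Y"
      then obtain S where S: "S \<in> Poly_Mapping.keys (graft_b \<tau> t0 :: _ \<Rightarrow>\<^sub>0 'k)" and T: "T = butcher l S"
        using keys_bdia[of "Poly_Mapping.single l (1::'k)" "graft_b \<tau> t0"] unfolding Y_def by auto
      show "nv T = nv \<tau> + nv (Node a ts) \<and> (T = lead \<tau> (Node a ts) \<or> dd T > dd \<tau> + nv \<tau> + dd (Node a ts))"
        using IH2 S unfolding T t by (auto simp: lead_butcher)
    qed
    have lX: "Poly_Mapping.lookup X (lead \<tau> (Node a ts)) = 0"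
    proof (rule ccontr)
      assume "Poly_Mapping.lookup X (lead \<tau> (Node a ts)) \<noteq> 0"
      then have "lead \<tau> (Node a ts) \<in> Poly_Mapping.keys X" by (simp add: in_keys_iff)
      with kX have "dd (lead \<tau> (Node a ts)) > dd \<tau> + nv \<tau> + dd (Node a ts)" by blast
      then show False by (simp only: dd_lead)
    qed
    have lY: "Poly_Mapping.lookup Y (lead \<tau> (Node a ts)) = 1"
      unfolding Y_def t lead_butcher lookup_bdia_single using IH2 by simp
    show ?thesis
      unfolding g using kX kY keys_add[of X Y] lX lY
      by (auto simp: lookup_add)
  qed
qed




fun psi :: "'a magma \<Rightarrow> 'a ptree" where
  "psi (MLeaf a) = Node a []"
| "psi (MOp s t) = lead (psi s) (psi t)"

lemma lead_neq_leaf: "lead s t \<noteq> Node a []" by (cases t) auto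
lemma lead_inj: "lead s t = lead s' t' \<Longrightarrow> s = s' \<and> t = t'"
  by (cases t; cases t') auto

lemma inj_psi: "inj psi"
proof -
  have "psi m = psi m' \<Longrightarrow> m = m'" for m m' :: "'a magma"
  proof (induction m arbitrary: m')
    case (MLeaf a) then show ?case by (cases m') (auto simp: lead_neq_leaf[symmetric])
  next
    case (MOp s t) then show ?case by (cases m') (auto simp: lead_neq_leaf dest!: lead_inj)
  qed
  then show ?thesis by (auto intro: injI)
qed

lemma surj_psi: "t \<in> range psi"
proof (induction t)
  case (Node a ts)
  then show ?case
  proof (induction ts)
    case Nil
    then show ?case by (metis psi.simps(1) rangeI)
  next
    case (Cons c cs)
    from Cons.prems have "c \<in> range psi" by simp
    then obtain m1 where m1: "psi m1 = c" by auto
    from Cons.IH Cons.prems have "Node a cs \<in> range psi" by simp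
    then obtain m2 where m2: "psi m2 = Node a cs" by auto
    have "psi (MOp m1 m2) = Node a (c # cs)" by (simp add: m1 m2)
    then show ?case by (metis rangeI)
  qed
qed

lemma graft_b_keys:
  assumes "T \<in> Poly_Mapping.keys (graft_b S U :: _ \<Rightarrow>\<^sub>0 'k::semiring_1)"
  shows "nv T = nv S + nv U \<and> (T = lead S U \<or> dd T > dd S + nv S + dd U)"
  using graft_b_lead[of S U, where 'k='k] assms by blast

lemma graft_b_lookup_lead: "Poly_Mapping.lookup (graft_b S U :: _ \<Rightarrow>\<^sub>0 'k::semiring_1) (lead S U) = 1"
  using graft_b_lead[of S U, where 'k='k] by blast

fun phi0 :: "'a magma \<Rightarrow> ('a ptree \<Rightarrow>\<^sub>0 'k::semiring_1)" where
  "phi0 (MLeaf a) = Poly_Mapping.single (Node a []) 1"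
| "phi0 (MOp s t) = graft (phi0 s) (phi0 t)"

definition Inv :: "'a magma \<Rightarrow> ('a ptree \<Rightarrow>\<^sub>0 'k::semiring_1) \<Rightarrow> bool" where
  "Inv m v \<longleftrightarrow> Poly_Mapping.lookup v (psi m) = 1 \<and>
     (\<forall>T\<in>Poly_Mapping.keys v. nv T = nv (psi m) \<and> (T = psi m \<or> dd T > dd (psi m)))"

lemma Inv_phi0: "Inv m (phi0 m :: _ \<Rightarrow>\<^sub>0 'k::comm_semiring_1)"
proof (induction m)
  case (MLeaf a)
  then show ?case by (simp add: Inv_def)
next
  case (MOp s t)
  define X where "X = (phi0 s :: _ \<Rightarrow>\<^sub>0 'k)"
  define Y where "Y = (phi0 t :: _ \<Rightarrow>\<^sub>0 'k)"
  define L where "L = lead (psi s) (psi t)"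
  have IX: "Inv s X" and IY: "Inv t Y" using MOp X_def Y_def by auto
  have XS: "Poly_Mapping.lookup X (psi s) = 1" using IX by (simp add: Inv_def)
  have YS: "Poly_Mapping.lookup Y (psi t) = 1" using IY by (simp add: Inv_def)
  have kX: "\<And>S. S \<in> Poly_Mapping.keys X \<Longrightarrow> nv S = nv (psi s) \<and> (S = psi s \<or> dd S > dd (psi s))"
    using IX by (simp add: Inv_def)
  have kY: "\<And>S. S \<in> Poly_Mapping.keys Y \<Longrightarrow> nv S = nv (psi t) \<and> (S = psi t \<or> dd S > dd (psi t))"
    using IY by (simp add: Inv_def)
  have dL: "dd L = dd (psi s) + nv (psi s) + dd (psi t)" by (simp add: L_def dd_lead)
  have nL: "nv L = nv (psi s) + nv (psi t)" by (simp add: L_def nv_lead)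
  have keysG: "nv T = nv L \<and> (T = L \<or> dd T > dd L)"
    if S: "S \<in> Poly_Mapping.keys X" and U: "U \<in> Poly_Mapping.keys Y"
      and T: "T \<in> Poly_Mapping.keys (graft_b S U :: _ \<Rightarrow>\<^sub>0 'k)" for S U T
  proof -
    have g: "nv T = nv S + nv U \<and> (T = lead S U \<or> dd T > dd S + nv S + dd U)"
      by (rule graft_b_keys[OF T])
    from kX[OF S] kY[OF U] g show ?thesis
      unfolding dL nL L_def by (auto simp: dd_lead nv_lead)
  qed
  have term0: "Poly_Mapping.lookup X S * Poly_Mapping.lookup Y U * Poly_Mapping.lookup (graft_b S U :: _ \<Rightarrow>\<^sub>0 'k) L
      = (if S = psi s then if U = psi t then 1 else 0 else 0)"
    if S: "S \<in> Poly_Mapping.keys X" and U: "U \<in> Poly_Mapping.keys Y" for S U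
  proof (cases "S = psi s \<and> U = psi t")
    case True
    then show ?thesis using XS YS graft_b_lookup_lead[of S U, where 'k='k] by (simp add: L_def)
  next
    case False
    have "L \<notin> Poly_Mapping.keys (graft_b S U :: _ \<Rightarrow>\<^sub>0 'k)"
    proof
      assume T: "L \<in> Poly_Mapping.keys (graft_b S U :: _ \<Rightarrow>\<^sub>0 'k)"
      have g: "nv L = nv S + nv U \<and> (L = lead S U \<or> dd L > dd S + nv S + dd U)"
        by (rule graft_b_keys[OF T])
      from kX[OF S] kY[OF U] g False show False
        unfolding dL L_def by (auto dest!: lead_inj simp: dd_lead)
    qed
    then show ?thesis using False by (auto simp: in_keys_iff)
  qed
  have lk: "Poly_Mapping.lookup (graft X Y) L = 1"
  proof -
    have "Poly_Mapping.lookup (graft X Y) L = (\<Sum>S\<in>Poly_Mapping.keys X. \<Sum>U\<in>Poly_Mapping.keys Y.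
        (if S = psi s then if U = psi t then 1 else 0 else 0))"
      unfolding graft_def lookup_bilin
      by (intro sum.cong refl term0) auto
    also have "\<dots> = (\<Sum>S\<in>Poly_Mapping.keys X. (if S = psi s then 1 else 0))"
    proof (rule sum.cong[OF refl])
      fix S show "(\<Sum>U\<in>Poly_Mapping.keys Y. (if S = psi s then if U = psi t then 1 else 0 else 0)) = (if S = psi s then 1 else (0::'k))"
        using YS by (cases "S = psi s") (auto simp: in_keys_iff)
    qed
    also have "\<dots> = 1"
      using XS by (auto simp: in_keys_iff)
    finally show ?thesis .
  qed
  have kk: "\<forall>T\<in>Poly_Mapping.keys (graft X Y). nv T = nv L \<and> (T = L \<or> dd T > dd L)"
  proof
    fix T assume "T \<in> Poly_Mapping.keys (graft X Y)"
    then have "T \<in> (\<Union>S\<in>Poly_Mapping.keys X. \<Union>U\<in>Poly_Mapping.keys Y. Poly_Mapping.keys (graft_b S U :: _ \<Rightarrow>\<^sub>0 'k))"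
      unfolding graft_def by (rule keys_bilin[THEN subsetD])
    then show "nv T = nv L \<and> (T = L \<or> dd T > dd L)" using keysG by blast
  qed
  show ?case using lk kk by (simp add: Inv_def X_def Y_def L_def)
qed




lemma dd_aux: "(\<forall>c\<in>set ts. dd c \<le> nv c * nv c) \<Longrightarrow>
  sum_list (map (\<lambda>c. dd c + nv c) ts) \<le> sum_list (map nv ts) * sum_list (map nv ts) + sum_list (map nv ts)"
proof (induction ts)
  case Nil then show ?case by simp
next
  case (Cons c cs)
  let ?S = "sum_list (map nv cs)"
  have h: "dd c \<le> nv c * nv c" using Cons.prems by simp
  have r: "sum_list (map (\<lambda>c. dd c + nv c) cs) \<le> ?S * ?S + ?S" using Cons by simp
  have "sum_list (map (\<lambda>c. dd c + nv c) (c # cs)) \<le> nv c * nv c + nv c + (?S * ?S + ?S)"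
    using h r by simp
  also have "\<dots> \<le> (nv c + ?S) * (nv c + ?S) + (nv c + ?S)"
    by (simp add: algebra_simps)
  finally show ?case by simp
qed

lemma dd_bound: "dd t \<le> nv t * nv t"
proof (induction t)
  case (Node a ts)
  let ?S = "sum_list (map nv ts)"
  have "dd (Node a ts) \<le> ?S * ?S + ?S"
    using dd_aux[of ts] Node.IH by simp
  also have "\<dots> \<le> Suc ?S * Suc ?S" by simp
  finally show ?case by simp
qed

lemma mh: "Vector_Spaces.linear sc sc f \<Longrightarrow> module_hom sc sc f"
  by (simp add: module_hom_iff_linear)

lemma lin_expand:
  fixes f :: "('a magma \<Rightarrow>\<^sub>0 'k::field) \<Rightarrow> ('a ptree \<Rightarrow>\<^sub>0 'k)"
  assumes lin: "Vector_Spaces.linear sc sc f" and b: "\<And>m. f (Poly_Mapping.single m 1) = phi0 m"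
  shows "f x = (\<Sum>m\<in>Poly_Mapping.keys x. sc (Poly_Mapping.lookup x m) (phi0 m))"
proof -
  interpret module_hom sc sc f by (rule mh[OF lin])
  have "f x = f (\<Sum>m\<in>Poly_Mapping.keys x. sc (Poly_Mapping.lookup x m) (Poly_Mapping.single m 1))"
    by (subst expand) (simp add: single_sc[symmetric])
  also have "\<dots> = (\<Sum>m\<in>Poly_Mapping.keys x. sc (Poly_Mapping.lookup x m) (phi0 m))"
    by (simp add: sum scale b)
  finally show ?thesis .
qed

definition phi :: "('a magma \<Rightarrow>\<^sub>0 'k::field) \<Rightarrow> ('a ptree \<Rightarrow>\<^sub>0 'k)" where
  "phi x = (\<Sum>m\<in>Poly_Mapping.keys x. sc (Poly_Mapping.lookup x m) (phi0 m))"

lemma phi_super: "finite M \<Longrightarrow> Poly_Mapping.keys x \<subseteq> M \<Longrightarrow>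
  phi x = (\<Sum>m\<in>M. sc (Poly_Mapping.lookup x m) (phi0 m))"
  unfolding phi_def by (rule sum.mono_neutral_left) (auto simp: in_keys_iff)

lemma phi_add: "phi (x + y) = phi x + phi y"
proof -
  let ?M = "Poly_Mapping.keys x \<union> Poly_Mapping.keys y"
  have e: "phi z = (\<Sum>m\<in>?M. sc (Poly_Mapping.lookup z m) (phi0 m))" if "Poly_Mapping.keys z \<subseteq> ?M" for z
    by (rule phi_super) (use that in auto)
  show ?thesis
    by (subst (1 2 3) e) (use keys_add[of x y] in \<open>auto simp: lookup_add sc_add_l sum.distrib\<close>)
qed

lemma phi_sc: "phi (sc c x) = sc c (phi x)"
proof -
  have "phi (sc c x) = (\<Sum>m\<in>Poly_Mapping.keys x. sc (Poly_Mapping.lookup (sc c x) m) (phi0 m))"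
    by (rule phi_super) (auto intro: keys_sc[THEN subsetD])
  then show ?thesis by (simp add: phi_def sc_sum_r sc_sc)
qed

lemma phi_lin: "Vector_Spaces.linear sc sc (phi :: ('a magma \<Rightarrow>\<^sub>0 'k::field) \<Rightarrow> _)"
  unfolding module_hom_iff_linear[symmetric] module_hom_def module_hom_axioms_def
  using vs_sc[where 'k='k and 'b="'a magma"] vs_sc[where 'k='k and 'b="'a ptree"]
  by (simp add: module_iff_vector_space phi_add phi_sc)

lemma phi_single: "phi (Poly_Mapping.single m 1) = phi0 m"
  by (simp add: phi_def)

lemma phi_mprod: "phi (mprod x y) = graft (phi x) (phi y)"
proof -
  interpret module_hom sc sc phi by (rule mh[OF phi_lin])
  have "phi (mprod x y) = (\<Sum>s\<in>Poly_Mapping.keys x. \<Sum>t\<in>Poly_Mapping.keys y.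
      sc (Poly_Mapping.lookup x s * Poly_Mapping.lookup y t) (phi0 (MOp s t)))"
    unfolding mprod_def bilin_def by (simp add: sum scale phi_single)
  also have "\<dots> = graft (phi x) (phi y)"
    unfolding phi_def graft_def bilin_sum1 bilin_sum2 bilin_sc1 bilin_sc2 sc_sum_r sc_sc
    by (simp add: graft_def ac_simps) (rule sum.swap)
  finally show ?thesis .
qed




lemma basis_vals:
  fixes f :: "('a magma \<Rightarrow>\<^sub>0 'k::field) \<Rightarrow> ('a ptree \<Rightarrow>\<^sub>0 'k)"
  assumes l: "\<forall>a. f (Poly_Mapping.single (MLeaf a) 1) = Poly_Mapping.single (Node a []) 1"
    and m: "\<forall>x y. f (mprod x y) = graft (f x) (f y)"
  shows "f (Poly_Mapping.single w 1) = phi0 w"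
proof (induction w)
  case (MLeaf a) then show ?case using l by simp
next
  case (MOp s t)
  have "Poly_Mapping.single (MOp s t) (1::'k) = mprod (Poly_Mapping.single s 1) (Poly_Mapping.single t 1)"
    unfolding mprod_def by (simp add: bilin_single1)
  then show ?case using m MOp by simp
qed

lemma inj0:
  fixes f :: "('a magma \<Rightarrow>\<^sub>0 'k::field) \<Rightarrow> ('a ptree \<Rightarrow>\<^sub>0 'k)"
  assumes lin: "Vector_Spaces.linear sc sc f" and b: "\<And>m. f (Poly_Mapping.single m 1) = phi0 m"
    and z: "f z = 0"
  shows "z = 0"
proof (rule ccontr)
  assume "z \<noteq> 0"
  then obtain m0 where "m0 \<in> Poly_Mapping.keys z"
    by (metis all_not_in_conv keys_eq_empty)
  then obtain m where m: "m \<in> Poly_Mapping.keys z" and mn: "\<And>m'. m' \<in> Poly_Mapping.keys z \<Longrightarrow> dd (psi m) \<le> dd (psi m')"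
    using ex_has_least_nat[of "\<lambda>m. m \<in> Poly_Mapping.keys z" m0 "\<lambda>m. dd (psi m)"] by blast
  have t: "Poly_Mapping.lookup z m' * Poly_Mapping.lookup (phi0 m' :: _ \<Rightarrow>\<^sub>0 'k) (psi m) =
      (if m' = m then Poly_Mapping.lookup z m else 0)" if m': "m' \<in> Poly_Mapping.keys z" for m'
  proof (cases "m' = m")
    case True
    then show ?thesis using Inv_phi0[of m, where 'k='k] by (simp add: Inv_def)
  next
    case False
    have "psi m \<notin> Poly_Mapping.keys (phi0 m' :: _ \<Rightarrow>\<^sub>0 'k)"
    proof
      assume "psi m \<in> Poly_Mapping.keys (phi0 m' :: _ \<Rightarrow>\<^sub>0 'k)"
      then have "psi m = psi m' \<or> dd (psi m) > dd (psi m')"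
        using Inv_phi0[of m', where 'k='k] by (simp add: Inv_def)
      then show False using mn[OF m'] False inj_psi by (auto dest: injD)
    qed
    then show ?thesis using False by (simp add: in_keys_iff)
  qed
  have "Poly_Mapping.lookup (f z) (psi m) = (\<Sum>m'\<in>Poly_Mapping.keys z. Poly_Mapping.lookup z m' * Poly_Mapping.lookup (phi0 m') (psi m))"
    by (simp add: lin_expand[OF lin b] lookup_sum)
  also have "\<dots> = (\<Sum>m'\<in>Poly_Mapping.keys z. (if m' = m then Poly_Mapping.lookup z m else 0))"
    by (rule sum.cong[OF refl t])
  also have "\<dots> = Poly_Mapping.lookup z m" using m by simp
  finally have "Poly_Mapping.lookup z m = 0" using z by simp
  then show False using m by (simp add: in_keys_iff)
qed

lemma range_comb:
  fixes f :: "('a magma \<Rightarrow>\<^sub>0 'k::field) \<Rightarrow> ('a ptree \<Rightarrow>\<^sub>0 'k)"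
  assumes lin: "Vector_Spaces.linear sc sc f" and fin: "finite A"
    and r: "\<And>T. T \<in> A \<Longrightarrow> Poly_Mapping.single T 1 \<in> range f"
  shows "(\<Sum>T\<in>A. sc (c T) (Poly_Mapping.single T 1)) \<in> range f"
proof -
  interpret module_hom sc sc f by (rule mh[OF lin])
  from r have "\<forall>T\<in>A. \<exists>w. f w = Poly_Mapping.single T 1" by (metis imageE)
  then obtain g where g: "\<And>T. T \<in> A \<Longrightarrow> f (g T) = Poly_Mapping.single T 1" by metis
  have "f (\<Sum>T\<in>A. sc (c T) (g T)) = (\<Sum>T\<in>A. sc (c T) (Poly_Mapping.single T 1))"
    by (simp add: sum scale g)
  then show ?thesis by (metis rangeI)
qed

lemma surj0:
  fixes f :: "('a magma \<Rightarrow>\<^sub>0 'k::field) \<Rightarrow> ('a ptree \<Rightarrow>\<^sub>0 'k)"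
  assumes lin: "Vector_Spaces.linear sc sc f" and b: "\<And>m. f (Poly_Mapping.single m 1) = phi0 m"
  shows "Poly_Mapping.single T 1 \<in> range f"
proof (induction "nv T * nv T - dd T" arbitrary: T rule: less_induct)
  case less
  interpret module_hom sc sc f by (rule mh[OF lin])
  obtain m where T: "T = psi m" using surj_psi[of T] by auto
  have I: "Inv m (phi0 m :: _ \<Rightarrow>\<^sub>0 'k)" by (rule Inv_phi0)
  define R where "R = (phi0 m :: _ \<Rightarrow>\<^sub>0 'k) - Poly_Mapping.single T 1"
  have kR: "T' \<in> Poly_Mapping.keys R \<Longrightarrow> nv T' = nv T \<and> dd T' > dd T" for T'
  proof -
    assume a: "T' \<in> Poly_Mapping.keys R"
    have "T' \<noteq> T" using a I by (auto simp: R_def in_keys_iff lookup_minus Inv_def T)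
    moreover have "T' \<in> Poly_Mapping.keys (phi0 m :: _ \<Rightarrow>\<^sub>0 'k)"
      using a \<open>T' \<noteq> T\<close> by (auto simp: R_def in_keys_iff lookup_minus lookup_single)
    ultimately show ?thesis using I by (auto simp: Inv_def T)
  qed
  have "Poly_Mapping.single T' 1 \<in> range f" if "T' \<in> Poly_Mapping.keys R" for T'
  proof (rule less)
    have "dd T' \<le> nv T' * nv T'" by (rule dd_bound)
    then show "nv T' * nv T' - dd T' < nv T * nv T - dd T" using kR[OF that] by (simp; linarith)
  qed
  then have "(\<Sum>T'\<in>Poly_Mapping.keys R. sc (Poly_Mapping.lookup R T') (Poly_Mapping.single T' 1)) \<in> range f"
    by (intro range_comb[OF lin]) auto
  then have "R \<in> range f"
    by (subst expand) (simp add: single_sc[symmetric])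
  then obtain r where r: "f r = R" by auto
  have "f (Poly_Mapping.single m 1 - r) = Poly_Mapping.single T 1"
    by (simp add: diff b r R_def)
  then show ?case by (metis rangeI)
qed

theorem lemma2p10:
  fixes A :: "'a::finite itself" and K :: "'k::field_char_0 itself"
  defines "P \<equiv> \<lambda>\<phi> :: ('a magma \<Rightarrow>\<^sub>0 'k) \<Rightarrow> ('a ptree \<Rightarrow>\<^sub>0 'k).
             Vector_Spaces.linear sc sc \<phi>
           \<and> (\<forall>a. \<phi> (Poly_Mapping.single (MLeaf a) 1) = Poly_Mapping.single (Node a []) 1)
           \<and> (\<forall>x y. \<phi> (mprod x y) = graft (\<phi> x) (\<phi> y))"
  shows "(\<exists>!\<phi>. P \<phi>) \<and> (\<forall>\<phi>. P \<phi> \<longrightarrow> bij \<phi>)"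
proof -
  have Pphi: "P phi" unfolding P_def using phi_lin phi_mprod by (auto simp: phi_single)
  have bv: "P f \<Longrightarrow> f (Poly_Mapping.single w 1) = phi0 w" for f w
    unfolding P_def by (intro basis_vals) auto
  have uniq: "P f \<Longrightarrow> f = phi" for f
  proof
    fix x assume Pf: "P f"
    have lin: "Vector_Spaces.linear sc sc f" using Pf by (simp add: P_def)
    show "f x = phi x" using lin_expand[OF lin bv[OF Pf]] by (simp add: phi_def)
  qed
  have bij: "P f \<Longrightarrow> bij f" for f
  proof -
    assume Pf: "P f"
    have lin: "Vector_Spaces.linear sc sc f" using Pf by (simp add: P_def)
    interpret module_hom sc sc f by (rule mh[OF lin])
    have b: "\<And>w. f (Poly_Mapping.single w 1) = phi0 w" using bv[OF Pf] .
    have "inj f"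
    proof (rule injI)
      fix x y assume "f x = f y"
      then have "f (x - y) = 0" by (simp add: diff)
      then have "x - y = 0" by (rule inj0[OF lin b])
      then show "x = y" by simp
    qed
    moreover have "surj f"
    proof -
      have "v \<in> range f" for v
      proof -
        have "(\<Sum>T\<in>Poly_Mapping.keys v. sc (Poly_Mapping.lookup v T) (Poly_Mapping.single T 1)) \<in> range f"
          by (intro range_comb[OF lin] surj0[OF lin b]) auto
        then show ?thesis by (subst expand) (simp add: single_sc[symmetric])
      qed
      then show ?thesis by auto
    qed
    ultimately show "bij f" by (simp add: bij_def)
  qed
  show ?thesis using Pphi uniq bij by blast
qed


end
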